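(* As $n\to\infty$, the ratio $|E(G_n)|/|E(SG(n,2))|$ tends to $2/3$.
   Context: Let $[n]=\{1,\dots,n\}$. A $2$-subset $\{a,b\}$ of $[n]$ with $a<b$ is called stable if $b \neq a+1$ and $\{a,b\}\neq\{1,n\}$; it is written $ab$. The Schrijver graph $SG(n,2)$ has as vertices all stable $2$-subsets of $[n]$, two being adjacent iff they are disjoint. For $n\ge 4$, the graph $G_n$ has the same vertex set; two vertices $ab$ ($a<b$) and $cd$ ($c<d$) with $a<c$ are adjacent in $G_n$ if and only if $\{a,b\}\cap\{c,d\}=\emptyset$ and either $a<c<b<d$, or $1<a<c<d<b$. *)

theory Defs
  imports Complex_Main
begin

definition stable_vertices :: "nat \<Rightarrow> (nat \<times> nat) set" where
  "stable_vertices n = {(a,b). 1 \<le> a \<and> a < b \<and> b \<le> n \<and> b \<noteq> a + 1 \<and> \<not> (a = 1 \<and> b = n)}"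

definition SG_adj :: "nat \<times> nat \<Rightarrow> nat \<times> nat \<Rightarrow> bool" where
  "SG_adj u v = ({fst u, snd u} \<inter> {fst v, snd v} = {})"

definition G_adj_ord :: "nat \<times> nat \<Rightarrow> nat \<times> nat \<Rightarrow> bool" where
  "G_adj_ord u v = (case u of (a,b) \<Rightarrow> case v of (c,d) \<Rightarrow>
      a < c \<and> {a,b} \<inter> {c,d} = {} \<and> ((a < c \<and> c < b \<and> b < d) \<or> (1 < a \<and> a < c \<and> c < d \<and> d < b)))"

definition G_adj :: "nat \<times> nat \<Rightarrow> nat \<times> nat \<Rightarrow> bool" where
  "G_adj u v = (G_adj_ord u v \<or> G_adj_ord v u)"

definition edges_of :: "(nat \<times> nat \<Rightarrow> nat \<times> nat \<Rightarrow> bool) \<Rightarrow> nat \<Rightarrow> (nat \<times> nat) set set" where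
  "edges_of adj n = {{u, v} | u v. u \<in> stable_vertices n \<and> v \<in> stable_vertices n \<and> u \<noteq> v \<and> adj u v}"

end

theory Submission
  imports Defs "HOL-Real_Asymp.Real_Asymp"
begin

definition Pset :: "(nat \<times> nat \<Rightarrow> nat \<times> nat \<Rightarrow> bool) \<Rightarrow> nat \<Rightarrow> ((nat \<times> nat) \<times> (nat \<times> nat)) set" where
  "Pset adj n = {(u,v). u \<in> stable_vertices n \<and> v \<in> stable_vertices n \<and> fst u < fst v \<and> adj u v}"

lemma edges_card:
  assumes sym: "\<And>u v. adj u v \<Longrightarrow> adj v u" and ne: "\<And>u v. adj u v \<Longrightarrow> fst u \<noteq> fst v"
  shows "card (edges_of adj n) = card (Pset adj n)"
proof -
  have "bij_betw (\<lambda>(u,v). {u,v}) (Pset adj n) (edges_of adj n)"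
    unfolding bij_betw_def
  proof
    show "inj_on (\<lambda>(u,v). {u,v}) (Pset adj n)"
      by (auto simp: inj_on_def Pset_def doubleton_eq_iff)
    show "(\<lambda>(u,v). {u,v}) ` Pset adj n = edges_of adj n"
    proof
      show "(\<lambda>(u,v). {u,v}) ` Pset adj n \<subseteq> edges_of adj n"
        by (auto simp: Pset_def edges_of_def)
    next
      show "edges_of adj n \<subseteq> (\<lambda>(u,v). {u,v}) ` Pset adj n"
      proof
        fix e assume "e \<in> edges_of adj n"
        then obtain u v where e: "e = {u,v}" "u \<in> stable_vertices n" "v \<in> stable_vertices n" "adj u v"
          by (auto simp: edges_of_def)
        show "e \<in> (\<lambda>(u,v). {u,v}) ` Pset adj n"
        proof (cases "fst u < fst v")
          case True
          then have "(u,v) \<in> Pset adj n" using e by (auto simp: Pset_def)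
          then show ?thesis using e by force
        next
          case False
          then have "fst v < fst u" using ne[OF e(4)] by linarith
          then have "(v,u) \<in> Pset adj n" using e sym by (auto simp: Pset_def)
          moreover have "e = {v,u}" using e by auto
          ultimately show ?thesis by force
        qed
      qed
    qed
  qed
  then show ?thesis using bij_betw_same_card by metis
qed

lemma card_SG: "card (edges_of SG_adj n) = card (Pset SG_adj n)"
  by (rule edges_card) (auto simp: SG_adj_def)

lemma card_G: "card (edges_of G_adj n) = card (Pset G_adj n)"
  by (rule edges_card) (auto simp: G_adj_def G_adj_ord_def split: prod.splits)

definition Sep :: "nat \<Rightarrow> ((nat \<times> nat) \<times> (nat \<times> nat)) set" where
  "Sep n = {((a,b),(c,d)). 1 \<le> a \<and> a + 1 < b \<and> b < c \<and> c + 1 < d \<and> d \<le> n}"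
definition Cross :: "nat \<Rightarrow> ((nat \<times> nat) \<times> (nat \<times> nat)) set" where
  "Cross n = {((a,b),(c,d)). 1 \<le> a \<and> a < c \<and> c < b \<and> b < d \<and> d \<le> n}"
definition NestS :: "nat \<Rightarrow> ((nat \<times> nat) \<times> (nat \<times> nat)) set" where
  "NestS n = {((a,b),(c,d)). 1 \<le> a \<and> a < c \<and> c + 1 < d \<and> d < b \<and> b \<le> n \<and> \<not> (a = 1 \<and> b = n)}"
definition NestG :: "nat \<Rightarrow> ((nat \<times> nat) \<times> (nat \<times> nat)) set" where
  "NestG n = {((a,b),(c,d)). 1 < a \<and> a < c \<and> c + 1 < d \<and> d < b \<and> b \<le> n}"
definition Full :: "nat \<Rightarrow> ((nat \<times> nat) \<times> (nat \<times> nat)) set" where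
  "Full n = {((a,b),(c,d)). 1 \<le> a \<and> a < b \<and> b < c \<and> c < d \<and> d \<le> n}"
definition FullN :: "nat \<Rightarrow> ((nat \<times> nat) \<times> (nat \<times> nat)) set" where
  "FullN n = {((a,b),(c,d)). 1 \<le> a \<and> a < c \<and> c < d \<and> d < b \<and> b \<le> n}"

lemma P_SG: "Pset SG_adj n = Sep n \<union> Cross n \<union> NestS n"
proof (rule set_eqI)
  fix x :: "(nat \<times> nat) \<times> (nat \<times> nat)"
  obtain a b c d where x: "x = ((a,b),(c,d))" by (metis prod.collapse)
  show "x \<in> Pset SG_adj n \<longleftrightarrow> x \<in> Sep n \<union> Cross n \<union> NestS n"
    unfolding x Pset_def SG_adj_def stable_vertices_def Sep_def Cross_def NestS_def
    by simp arith
qed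

lemma P_G: "Pset G_adj n = Cross n \<union> NestG n"
proof (rule set_eqI)
  fix x :: "(nat \<times> nat) \<times> (nat \<times> nat)"
  obtain a b c d where x: "x = ((a,b),(c,d))" by (metis prod.collapse)
  show "x \<in> Pset G_adj n \<longleftrightarrow> x \<in> Cross n \<union> NestG n"
    unfolding x Pset_def G_adj_def G_adj_ord_def stable_vertices_def Cross_def NestG_def
    by simp arith
qed

definition Box :: "nat \<Rightarrow> ((nat \<times> nat) \<times> (nat \<times> nat)) set" where
  "Box n = ({..n} \<times> {..n}) \<times> ({..n} \<times> {..n})"

lemma finite_Box: "finite (Box n)" by (simp add: Box_def)

lemma fin_Full: "finite (Full n)"
  by (rule finite_subset[OF _ finite_Box]) (auto simp: Full_def Box_def)
lemma fin_FullN: "finite (FullN n)"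
  by (rule finite_subset[OF _ finite_Box]) (auto simp: FullN_def Box_def)
lemma fin_Cross: "finite (Cross n)"
  by (rule finite_subset[OF _ finite_Box]) (auto simp: Cross_def Box_def)
lemma fin_Sep: "finite (Sep n)"
  by (rule finite_subset[OF _ finite_Box]) (auto simp: Sep_def Box_def)
lemma fin_NestS: "finite (NestS n)"
  by (rule finite_subset[OF _ finite_Box]) (auto simp: NestS_def Box_def)
lemma fin_NestG: "finite (NestG n)"
  by (rule finite_subset[OF _ finite_Box]) (auto simp: NestG_def Box_def)

definition sw :: "(nat \<times> nat) \<times> (nat \<times> nat) \<Rightarrow> (nat \<times> nat) \<times> (nat \<times> nat)" where
  "sw x = ((fst (fst x), fst (snd x)), (snd (fst x), snd (snd x)))"
definition sw2 :: "(nat \<times> nat) \<times> (nat \<times> nat) \<Rightarrow> (nat \<times> nat) \<times> (nat \<times> nat)" where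
  "sw2 x = ((fst (fst x), snd (snd x)), (snd (fst x), fst (snd x)))"
definition sw2' :: "(nat \<times> nat) \<times> (nat \<times> nat) \<Rightarrow> (nat \<times> nat) \<times> (nat \<times> nat)" where
  "sw2' x = ((fst (fst x), fst (snd x)), (snd (snd x), snd (fst x)))"

lemma card_Cross: "card (Cross n) = card (Full n)"
proof -
  have "bij_betw sw (Full n) (Cross n)"
    by (rule bij_betw_byWitness[where f' = sw]) (force simp: Full_def Cross_def sw_def)+
  then show ?thesis using bij_betw_same_card by metis
qed

lemma card_FullN: "card (FullN n) = card (Full n)"
proof -
  have "bij_betw sw2 (Full n) (FullN n)"
    by (rule bij_betw_byWitness[where f' = sw2']) (force simp: Full_def FullN_def sw2_def sw2'_def)+
  then show ?thesis using bij_betw_same_card by metis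
qed

definition Cube :: "nat \<Rightarrow> (nat \<times> nat \<times> nat) set" where
  "Cube n = {..n} \<times> {..n} \<times> {..n}"

lemma card_img_Cube: "card (f ` Cube n) \<le> (n+1)^3"
proof -
  have "card (f ` Cube n) \<le> card (Cube n)" by (rule card_image_le) (simp add: Cube_def)
  also have "card (Cube n) = (n+1)^3" by (simp add: Cube_def card_cartesian_product power3_eq_cube)
  finally show ?thesis .
qed

lemma small2:
  assumes "A - B \<subseteq> f ` Cube n \<union> g ` Cube n" "B \<subseteq> A" "finite A"
  shows "card A \<le> card B + 2 * (n+1)^3" "card B \<le> card A"
proof -
  have fB: "finite B" using assms finite_subset by blast
  have "card (A - B) \<le> card (f ` Cube n \<union> g ` Cube n)"
    by (rule card_mono[OF _ assms(1)]) (simp add: Cube_def)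
  also have "\<dots> \<le> card (f ` Cube n) + card (g ` Cube n)" by (rule card_Un_le)
  also have "\<dots> \<le> 2 * (n+1)^3" using card_img_Cube[of f n] card_img_Cube[of g n] by simp
  finally have "card (A - B) \<le> 2 * (n+1)^3" .
  moreover have "card (A - B) = card A - card B" using card_Diff_subset[OF fB assms(2)] .
  moreover show "card B \<le> card A" by (rule card_mono[OF assms(3) assms(2)])
  ultimately show "card A \<le> card B + 2 * (n+1)^3" by linarith
qed

lemma Sep_bounds: "card (Full n) \<le> card (Sep n) + 2 * (n+1)^3" "card (Sep n) \<le> card (Full n)"
proof -
  have "Full n - Sep n \<subseteq> (\<lambda>(a,c,d). ((a,a+1),(c,d))) ` Cube n \<union> (\<lambda>(a,b,c). ((a,b),(c,c+1))) ` Cube n"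
  proof
    fix x assume "x \<in> Full n - Sep n"
    then obtain a b c d where x: "x = ((a,b),(c,d))" "1 \<le> a" "a < b" "b < c" "c < d" "d \<le> n"
      "\<not> (a + 1 < b \<and> c + 1 < d)"
      by (auto simp: Full_def Sep_def)
    show "x \<in> (\<lambda>(a,c,d). ((a,a+1),(c,d))) ` Cube n \<union> (\<lambda>(a,b,c). ((a,b),(c,c+1))) ` Cube n"
    proof (cases "b = a + 1")
      case True
      then have "x = (\<lambda>(a,c,d). ((a,a+1),(c,d))) (a,c,d)" using x by simp
      moreover have "(a,c,d) \<in> Cube n" using x by (simp add: Cube_def)
      ultimately show ?thesis by blast
    next
      case False
      then have "d = c + 1" using x by linarith
      then have "x = (\<lambda>(a,b,c). ((a,b),(c,c+1))) (a,b,c)" using x by simp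
      moreover have "(a,b,c) \<in> Cube n" using x by (simp add: Cube_def)
      ultimately show ?thesis by blast
    qed
  qed
  moreover have "Sep n \<subseteq> Full n" by (auto simp: Sep_def Full_def)
  ultimately show "card (Full n) \<le> card (Sep n) + 2 * (n+1)^3" "card (Sep n) \<le> card (Full n)"
    using small2[OF _ _ fin_Full] by blast+
qed

lemma NestS_bounds: "card (FullN n) \<le> card (NestS n) + 2 * (n+1)^3" "card (NestS n) \<le> card (FullN n)"
proof -
  have "FullN n - NestS n \<subseteq> (\<lambda>(c,d,e). ((1,n),(c,d))) ` Cube n \<union> (\<lambda>(a,b,c). ((a,b),(c,c+1))) ` Cube n"
  proof
    fix x assume "x \<in> FullN n - NestS n"
    then obtain a b c d where x: "x = ((a,b),(c,d))" "1 \<le> a" "a < c" "c < d" "d < b" "b \<le> n"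
      "\<not> (c + 1 < d \<and> \<not> (a = 1 \<and> b = n))"
      by (auto simp: FullN_def NestS_def)
    show "x \<in> (\<lambda>(c,d,e). ((1,n),(c,d))) ` Cube n \<union> (\<lambda>(a,b,c). ((a,b),(c,c+1))) ` Cube n"
    proof (cases "a = 1 \<and> b = n")
      case True
      then have "x = (\<lambda>(c,d,e). ((1,n),(c,d))) (c,d,0)" using x by simp
      moreover have "(c,d,0) \<in> Cube n" using x by (simp add: Cube_def)
      ultimately show ?thesis by blast
    next
      case False
      then have "d = c + 1" using x by linarith
      then have "x = (\<lambda>(a,b,c). ((a,b),(c,c+1))) (a,b,c)" using x by simp
      moreover have "(a,b,c) \<in> Cube n" using x by (simp add: Cube_def)
      ultimately show ?thesis by blast
    qed
  qed
  moreover have "NestS n \<subseteq> FullN n" by (auto simp: NestS_def FullN_def)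
  ultimately show "card (FullN n) \<le> card (NestS n) + 2 * (n+1)^3" "card (NestS n) \<le> card (FullN n)"
    using small2[OF _ _ fin_FullN] by blast+
qed

lemma NestG_bounds: "card (FullN n) \<le> card (NestG n) + 2 * (n+1)^3" "card (NestG n) \<le> card (FullN n)"
proof -
  have "FullN n - NestG n \<subseteq> (\<lambda>(b,c,d). ((1,b),(c,d))) ` Cube n \<union> (\<lambda>(a,b,c). ((a,b),(c,c+1))) ` Cube n"
  proof
    fix x assume "x \<in> FullN n - NestG n"
    then obtain a b c d where x: "x = ((a,b),(c,d))" "1 \<le> a" "a < c" "c < d" "d < b" "b \<le> n"
      "\<not> (c + 1 < d \<and> 1 < a)"
    proof -
      assume H: "\<And>a b c d. x = ((a,b),(c,d)) \<Longrightarrow> 1 \<le> a \<Longrightarrow> a < c \<Longrightarrow> c < d \<Longrightarrow> d < b \<Longrightarrow> b \<le> n \<Longrightarrow> \<not> (c + 1 < d \<and> 1 < a) \<Longrightarrow> thesis"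
      obtain a b c d where "x = ((a,b),(c,d))" by (metis prod.collapse)
      with \<open>x \<in> FullN n - NestG n\<close> show thesis
        by (intro H[of a b c d]) (auto simp: FullN_def NestG_def)
    qed
    show "x \<in> (\<lambda>(b,c,d). ((1,b),(c,d))) ` Cube n \<union> (\<lambda>(a,b,c). ((a,b),(c,c+1))) ` Cube n"
    proof (cases "a = 1")
      case True
      then have "x = (\<lambda>(b,c,d). ((1,b),(c,d))) (b,c,d)" using x by simp
      moreover have "(b,c,d) \<in> Cube n" using x by (simp add: Cube_def)
      ultimately show ?thesis by blast
    next
      case False
      then have "d = c + 1" using x by linarith
      then have "x = (\<lambda>(a,b,c). ((a,b),(c,c+1))) (a,b,c)" using x by simp
      moreover have "(a,b,c) \<in> Cube n" using x by (simp add: Cube_def)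
      ultimately show ?thesis by blast
    qed
  qed
  moreover have "NestG n \<subseteq> FullN n" by (auto simp: NestG_def FullN_def)
  ultimately show "card (FullN n) \<le> card (NestG n) + 2 * (n+1)^3" "card (NestG n) \<le> card (FullN n)"
    using small2[OF _ _ fin_FullN] by blast+
qed

lemma Full_lower: "(n div 4)^4 \<le> card (Full n)"
proof -
  define m where "m = n div 4"
  have m4: "4 * m \<le> n" unfolding m_def by simp
  define D where "D = {1..m} \<times> {1..m} \<times> {1..m} \<times> {1..m}"
  have "inj_on (\<lambda>(i,j,k,l). ((i, m+j),(2*m+k, 3*m+l))) D"
    by (auto simp: inj_on_def D_def)
  moreover have "(\<lambda>(i,j,k,l). ((i, m+j),(2*m+k, 3*m+l))) ` D \<subseteq> Full n"
    using m4 by (auto simp: D_def Full_def)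
  ultimately have "card D \<le> card (Full n)"
    by (rule card_inj_on_le[OF _ _ fin_Full])
  moreover have "card D = m^4" by (simp add: D_def card_cartesian_product power4_eq_xxxx)
  ultimately show ?thesis unfolding m_def by simp
qed

lemma disj_SG: "Sep n \<inter> Cross n = {}" "(Sep n \<union> Cross n) \<inter> NestS n = {}"
  by (auto simp: Sep_def Cross_def NestS_def)
lemma disj_G: "Cross n \<inter> NestG n = {}"
  by (auto simp: Cross_def NestG_def)

lemma sG: "card (edges_of SG_adj n) = card (Sep n) + card (Full n) + card (NestS n)"
proof -
  have "card (Sep n \<union> Cross n \<union> NestS n) = card (Sep n \<union> Cross n) + card (NestS n)"
    by (rule card_Un_disjoint) (use fin_Sep fin_Cross fin_NestS disj_SG in auto)
  moreover have "card (Sep n \<union> Cross n) = card (Sep n) + card (Cross n)"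
    by (rule card_Un_disjoint) (use fin_Sep fin_Cross disj_SG in auto)
  ultimately show ?thesis unfolding card_SG P_SG card_Cross by simp
qed

lemma gG: "card (edges_of G_adj n) = card (Full n) + card (NestG n)"
proof -
  have "card (Cross n \<union> NestG n) = card (Cross n) + card (NestG n)"
    by (rule card_Un_disjoint) (use fin_Cross fin_NestG disj_G in auto)
  then show ?thesis unfolding card_G P_G card_Cross by simp
qed

lemma ratio_bounds:
  fixes T K g s :: real
  assumes "0 < T" "0 \<le> K" "4*K < T" "2*T - 2*K \<le> g" "g \<le> 2*T" "3*T - 4*K \<le> s" "s \<le> 3*T"
  shows "(2 - 2*(K/T))/3 \<le> g/s" "g/s \<le> 2/(3 - 4*(K/T))"
proof -
  have s0: "0 < s" using assms by linarith
  have e1: "(2 - 2*(K/T))/3 = (2*T - 2*K)/(3*T)" using assms(1) by (simp add: field_simps)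
  have e2: "2/(3 - 4*(K/T)) = (2*T)/(3*T - 4*K)" using assms(1) by (simp add: field_simps)
  have "(2*T - 2*K) * s \<le> (2*T - 2*K) * (3*T)"
    by (rule mult_left_mono) (use assms in linarith)+
  also have "\<dots> \<le> g * (3*T)" by (rule mult_right_mono) (use assms in linarith)+
  finally have "(2*T - 2*K)/(3*T) \<le> g/s" using s0 assms(1) by (simp add: divide_simps)
  then show "(2 - 2*(K/T))/3 \<le> g/s" by (simp only: e1)
  have d0: "0 < 3*T - 4*K" using assms by linarith
  have "g * (3*T - 4*K) \<le> (2*T) * (3*T - 4*K)"
    by (rule mult_right_mono) (use assms in linarith)+
  also have "\<dots> \<le> (2*T) * s" by (rule mult_left_mono) (use assms in linarith)+
  finally have "g/s \<le> (2*T)/(3*T - 4*K)" using s0 d0 by (simp add: divide_simps)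
  then show "g/s \<le> 2/(3 - 4*(K/T))" by (simp only: e2)
qed

lemma div4_real: "real n / 4 - 1 \<le> real (n div 4)"
proof -
  have "n < 4 * (n div 4) + 4" by simp
  then have "real n < 4 * real (n div 4) + 4" by linarith
  then show ?thesis by simp
qed

theorem proposition2:
  shows "(\<lambda>n. real (card (edges_of G_adj n)) / real (card (edges_of SG_adj n)))
           \<longlonglongrightarrow> 2 / 3"
proof -
  define T where "T n = real (card (Full n))" for n
  define K where "K n = real ((n+1)^3)" for n
  define r where "r n = K n / T n" for n
  have Tlow: "(real n / 4 - 1)^4 \<le> T n" if "n \<ge> 4" for n
  proof -
    have "(real n / 4 - 1)^4 \<le> real (n div 4) ^ 4"
      by (rule power_mono[OF div4_real]) (use that in simp)
    also have "\<dots> = real ((n div 4)^4)" by simp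
    also have "\<dots> \<le> T n" unfolding T_def using Full_lower by (simp only: of_nat_le_iff)
    finally show ?thesis .
  qed
  have lim0: "(\<lambda>n::nat. real (n+1)^3 / (real n / 4 - 1)^4) \<longlonglongrightarrow> 0"
    by real_asymp
  have r0: "r \<longlonglongrightarrow> 0"
  proof (rule tendsto_sandwich[OF _ _ tendsto_const lim0])
    show "\<forall>\<^sub>F n in sequentially. 0 \<le> r n"
      by (auto simp: r_def K_def T_def)
    show "\<forall>\<^sub>F n in sequentially. r n \<le> real (n+1)^3 / (real n / 4 - 1)^4"
    proof (rule eventually_sequentiallyI[of 5])
      fix n :: nat assume n: "5 \<le> n"
      have p: "0 < (real n / 4 - 1)^4" using n by simp
      have pT: "0 < T n" using p Tlow[of n] n by linarith
      have "K n / T n \<le> K n / (real n / 4 - 1)^4"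
        by (rule divide_left_mono) (use Tlow[of n] n p pT in \<open>auto simp: K_def\<close>)
      then show "r n \<le> real (n+1)^3 / (real n / 4 - 1)^4" by (simp add: r_def K_def)
    qed
  qed
  have evT: "\<forall>\<^sub>F n in sequentially. 0 < T n"
  proof (rule eventually_sequentiallyI[of 5])
    fix n :: nat assume n: "5 \<le> n"
    have "0 < (real n / 4 - 1)^4" using n by simp
    then show "0 < T n" using Tlow[of n] n by linarith
  qed
  have evr: "\<forall>\<^sub>F n in sequentially. r n < 1/4"
    using r0 by (rule order_tendstoD) simp
  have lo: "(\<lambda>n. (2 - 2 * r n) / 3) \<longlonglongrightarrow> 2/3"
    using r0 by (auto intro!: tendsto_eq_intros)
  have hi: "(\<lambda>n. 2 / (3 - 4 * r n)) \<longlonglongrightarrow> 2/3"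
    using r0 by (auto intro!: tendsto_eq_intros)
  show ?thesis
  proof (rule tendsto_sandwich[OF _ _ lo hi])
    have "\<forall>\<^sub>F n in sequentially. (2 - 2 * r n) / 3 \<le> real (card (edges_of G_adj n)) / real (card (edges_of SG_adj n))
        \<and> real (card (edges_of G_adj n)) / real (card (edges_of SG_adj n)) \<le> 2 / (3 - 4 * r n)"
      using evT evr
    proof eventually_elim
      case (elim n)
      have T0: "0 < T n" using elim by simp
      have K0: "0 \<le> K n" by (simp add: K_def)
      have KT: "4 * K n < T n" using elim T0 by (simp add: r_def divide_simps)
      have b1: "T n \<le> real (card (Sep n)) + 2 * K n" "real (card (Sep n)) \<le> T n"
        using Sep_bounds[of n] unfolding T_def K_def by linarith+
      have b2: "T n \<le> real (card (NestS n)) + 2 * K n" "real (card (NestS n)) \<le> T n"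
        using NestS_bounds[of n] card_FullN[of n] unfolding T_def K_def by linarith+
      have b3: "T n \<le> real (card (NestG n)) + 2 * K n" "real (card (NestG n)) \<le> T n"
        using NestG_bounds[of n] card_FullN[of n] unfolding T_def K_def by linarith+
      have sv: "real (card (edges_of SG_adj n)) = real (card (Sep n)) + T n + real (card (NestS n))"
        unfolding sG T_def by simp
      have gv: "real (card (edges_of G_adj n)) = T n + real (card (NestG n))"
        unfolding gG T_def by simp
      show ?case
        using ratio_bounds[OF T0 K0 KT, of "real (card (edges_of G_adj n))" "real (card (edges_of SG_adj n))"]
          b1 b2 b3 sv gv unfolding r_def by linarith
    qed
    then show "\<forall>\<^sub>F n in sequentially. (2 - 2 * r n) / 3 \<le> real (card (edges_of G_adj n)) / real (card (edges_of SG_adj n))"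
      and "\<forall>\<^sub>F n in sequentially. real (card (edges_of G_adj n)) / real (card (edges_of SG_adj n)) \<le> 2 / (3 - 4 * r n)"
      by (auto elim: eventually_mono)
  qed
qed

end
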